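(* Let $n\ge 2$ be an even integer and consider the configuration of $n$ lighthouses with center point light sources described in the context. Then the total dark area is infinite: $D(n)=\infty$. More precisely, for the target lighthouse $L_0$, no ray emitted by any other lighthouse passes through the region directly behind $L_0$ (on the side of $L_0$ away from the placement center $P$) in a way that bounds it, so the dark region behind $L_0$ is unbounded and of infinite area.
   Context: Setup ("lighthouse problem with center point light sources"): fix an integer $n\ge 1$ and a point $P$ (the placement center). There are $n$ lighthouses $L_0,L_1,\dots,L_{n-1}$, each an opaque closed disk of radius $1$; the center of $L_k$ is at distance $n$ from $P$, at polar angle $2\pi k/n$ around $P$ (so $L_0$'s center $C$ lies $n$ units to the right of $P$, and the lighthouses are numbered counter-clockwise). The illumination angle is $\alpha=2\pi/n$. Each lighthouse has a single point light source at its center, emitting light along straight rays within the angular sector of total angle $\alpha$ symmetric about the direction from its center toward $P$ (for $n=1$ this means all directions). Light is blocked by the lighthouse disks. A point outside all disks is dark if no such ray reaches it. By symmetry every lighthouse has a congruent dark region behind it (on the side away from $P$); $d(n)$ denotes the area of the dark region behind one lighthouse and $D(n)=n\cdot d(n)$ is the total dark area. *)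

theory Defs
  imports "HOL-Analysis.Analysis"
begin

text \<open>The plane is modelled as the complex numbers; the placement center P is 0.
  Lighthouse k (k < n) has center lh_center n k = n * cis (2 pi k / n) and is the
  closed disk of radius 1 around it.\<close>

definition lh_center :: "nat \<Rightarrow> nat \<Rightarrow> complex" where
  "lh_center n k = complex_of_real (real n) * cis (2 * pi * real k / real n)"

definition lh_disk :: "nat \<Rightarrow> nat \<Rightarrow> complex set" where
  "lh_disk n k = cball (lh_center n k) 1"

text \<open>Light emitted by the source at the center of lighthouse k travels along rays whose
  direction makes an angle of at most alpha/2 = pi/n with the direction towards P,
  i.e. direction - cis (2 pi k / n + theta) with |theta| <= pi/n. A point z is lit if
  it lies on such a ray and the segment from the source to z meets no other
  lighthouse disk (the ray leaves its own disk and, by convexity, never re-enters it).\<close>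

definition lit :: "nat \<Rightarrow> complex \<Rightarrow> bool" where
  "lit n z \<longleftrightarrow> (\<exists>k<n. \<exists>\<theta> t. \<bar>\<theta>\<bar> \<le> pi / real n \<and> t \<ge> 0 \<and>
      z = lh_center n k - complex_of_real t * cis (2 * pi * real k / real n + \<theta>) \<and>
      (\<forall>j<n. j \<noteq> k \<longrightarrow> closed_segment (lh_center n k) z \<inter> lh_disk n j = {}))"

definition dark :: "nat \<Rightarrow> complex \<Rightarrow> bool" where
  "dark n z \<longleftrightarrow> (\<forall>k<n. z \<notin> lh_disk n k) \<and> \<not> lit n z"

definition behind0 :: "nat \<Rightarrow> complex set" where
  "behind0 n = {z. Re z > real n}"

end

theory Submission
  imports Defs
begin

lemma lh_center_alt: "lh_center n k = complex_of_real (real n) * cis (2 * pi * real k / real n)"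
  by (simp add: lh_center_def)

lemma key_identity:
  fixes n t \<phi> \<theta> :: real
  assumes "z = complex_of_real n * cis \<phi> - complex_of_real t * cis (\<phi> + \<theta>)"
  shows "Im z * (1 - cos \<phi>) + (Re z - n) * sin \<phi> = t * (sin \<theta> - sin (\<phi> + \<theta>))"
proof -
  have "Re z = n * cos \<phi> - t * cos (\<phi> + \<theta>)" "Im z = n * sin \<phi> - t * sin (\<phi> + \<theta>)"
    using assms by simp_all
  moreover have "sin \<theta> = sin (\<phi> + \<theta>) * cos \<phi> - cos (\<phi> + \<theta>) * sin \<phi>"
    using sin_diff[of "\<phi> + \<theta>" \<phi>] by simp
  ultimately show ?thesis by algebra
qed

lemma closed_hit:
  fixes s :: complex and D :: "complex set"
  assumes "closed D"
  shows "closed {z. closed_segment s z \<inter> D \<noteq> {}}"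
proof -
  have eq: "{z. closed_segment s z \<inter> D \<noteq> {}} = {z. \<exists>u. u \<in> {0..1::real} \<and> (u, z) \<in> {p. (1 - fst p) *\<^sub>R s + fst p *\<^sub>R snd p \<in> D}}"
    by (auto simp: closed_segment_def)
  have "closed ((\<lambda>p. (1 - fst p) *\<^sub>R s + fst p *\<^sub>R snd p) -` D)"
    by (intro closed_vimage assms continuous_intros)
  then have "closed {p. (1 - fst p) *\<^sub>R s + fst p *\<^sub>R snd p \<in> D}"
    by (simp add: vimage_def)
  then show ?thesis unfolding eq by (intro closed_compact_projection) auto
qed

lemma not_lit:
  fixes n :: nat and z :: complex and \<epsilon> :: real
  assumes n: "n \<ge> 2" "even n" and x: "Re z > real n + 1" and y: "\<bar>Im z\<bar> < \<epsilon>"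
    and e: "\<epsilon> \<le> 1/2"
    and es: "\<And>k. 0 < k \<Longrightarrow> k < n \<Longrightarrow> k \<noteq> n div 2 \<Longrightarrow> 2 * \<epsilon> \<le> \<bar>sin (2 * pi * real k / real n)\<bar>"
  shows "\<not> lit n z"
proof
  assume "lit n z"
  then obtain k \<theta> t where k: "k < n" and th: "\<bar>\<theta>\<bar> \<le> pi / real n" and t: "t \<ge> 0"
    and z: "z = lh_center n k - complex_of_real t * cis (2 * pi * real k / real n + \<theta>)"
    and seg: "\<forall>j<n. j \<noteq> k \<longrightarrow> closed_segment (lh_center n k) z \<inter> lh_disk n j = {}"
    unfolding lit_def by blast
  define \<phi> where "\<phi> = 2 * pi * real k / real n"
  have npos: "real n > 0" using n by simp
  have z': "z = complex_of_real n * cis \<phi> - complex_of_real t * cis (\<phi> + \<theta>)"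
    using z by (simp add: lh_center_def \<phi>_def)
  have ident: "Im z * (1 - cos \<phi>) + (Re z - n) * sin \<phi> = t * (sin \<theta> - sin (\<phi> + \<theta>))"
    by (rule key_identity[OF z'])
  have sd: "sin (\<phi> + \<theta>) - sin \<theta> = 2 * sin (\<phi>/2) * cos (\<phi>/2 + \<theta>)"
    using sin_diff_sin[of "\<phi> + \<theta>" \<theta>] by (simp add: add_divide_distrib add.commute)
  have half: "\<phi>/2 = pi * real k / real n" by (simp add: \<phi>_def)
  have thb: "- (pi / real n) \<le> \<theta>" "\<theta> \<le> pi / real n" using th by auto
  have cosb: "\<bar>Im z * (1 - cos \<phi>)\<bar> < 2 * \<epsilon>"
  proof -
    have "\<bar>1 - cos \<phi>\<bar> \<le> 2" using cos_ge_minus_one[of \<phi>] cos_le_one[of \<phi>] by auto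
    then have "\<bar>Im z\<bar> * \<bar>1 - cos \<phi>\<bar> \<le> \<bar>Im z\<bar> * 2" by (intro mult_left_mono) auto
    then show ?thesis using y by (simp add: abs_mult)
  qed
  consider "k = 0" | "k = n div 2" | "0 < k" "k < n div 2" | "n div 2 < k" by linarith
  then show False
  proof cases
    case 1
    have pn: "pi / real n \<le> pi / 2" using n by (intro divide_left_mono) auto
    have "0 \<le> cos \<theta>" using thb pn by (intro cos_ge_zero) linarith+
    moreover have "Re z = real n - t * cos \<theta>" using z' 1 by (simp add: \<phi>_def)
    ultimately have "Re z \<le> real n" using t by simp
    then show False using x by simp
  next
    case 2
    have kpos: "k \<noteq> 0" using 2 n by auto
    have "real k = real n / 2" using 2 n by (auto elim!: evenE)
    then have "\<phi> = pi" using npos by (simp add: \<phi>_def field_simps)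
    then have c: "lh_center n k = - complex_of_real n" by (simp add: lh_center_def \<phi>_def[symmetric])
    define \<mu> where "\<mu> = 2 * real n / (Re z + real n)"
    have den: "Re z + real n > 0" using x by simp
    have mu0: "0 \<le> \<mu>" "\<mu> \<le> 1" using den x by (auto simp: \<mu>_def field_simps)
    define p where "p = (1 - \<mu>) *\<^sub>R (- complex_of_real n) + \<mu> *\<^sub>R z"
    have "p \<in> closed_segment (lh_center n k) z"
      unfolding c p_def closed_segment_def using mu0 by blast
    moreover have "Re p = real n"
    proof -
      have m: "\<mu> * (Re z + real n) = 2 * real n" using den by (simp add: \<mu>_def)
      have "Re p = - real n + \<mu> * (Re z + real n)" by (simp add: p_def algebra_simps)
      then show ?thesis using m by simp
    qed
    moreover have "Im p = \<mu> * Im z" by (simp add: p_def)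
    ultimately have pin: "p \<in> closed_segment (lh_center n k) z" and rp: "Re p = real n"
      and ip: "Im p = \<mu> * Im z" by auto
    have "\<bar>\<mu> * Im z\<bar> \<le> \<bar>Im z\<bar>" using mu0 by (simp add: abs_mult mult_left_le_one_le)
    then have "\<bar>Im p\<bar> \<le> 1" using ip y e by simp
    moreover have "dist (lh_center n 0) p = \<bar>Im p\<bar>"
      by (simp add: lh_center_def dist_norm cmod_def rp)
    ultimately have "p \<in> lh_disk n 0" by (simp add: lh_disk_def)
    moreover have "closed_segment (lh_center n k) z \<inter> lh_disk n 0 = {}" using seg kpos n by auto
    ultimately show False using pin by blast
  next
    case 3
    have k1: "real k \<ge> 1" "2 * real k + 2 \<le> real n" using 3 n by (auto elim!: evenE)
    have s2: "0 < sin (\<phi>/2)" unfolding half using k1 npos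
      by (intro sin_gt_zero) (auto simp: field_simps)
    have lo: "0 \<le> \<phi>/2 + \<theta>"
    proof -
      have "pi / real n = pi * 1 / real n" by simp
      also have "\<dots> \<le> pi * real k / real n"
        by (intro divide_right_mono mult_left_mono) (use k1 in auto)
      finally have "pi / real n \<le> pi * real k / real n" .
      then show ?thesis using thb half by linarith
    qed
    have hi: "\<phi>/2 + \<theta> \<le> pi / 2"
    proof -
      have "pi * real k / real n + pi / real n = pi * (real k + 1) / real n" by (simp add: distrib_left add_divide_distrib)
      also have "\<dots> \<le> pi * (real n / 2) / real n"
        by (intro divide_right_mono mult_left_mono) (use k1 in auto)
      also have "\<dots> = pi / 2" using npos by simp
      finally show ?thesis using thb half by linarith
    qed
    have "0 \<le> cos (\<phi>/2 + \<theta>)" using lo hi by (intro cos_ge_zero) auto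
    then have "0 \<le> sin (\<phi> + \<theta>) - sin \<theta>" using sd s2 by simp
    then have rhs: "t * (sin \<theta> - sin (\<phi> + \<theta>)) \<le> 0" using t
      by (simp add: mult_nonneg_nonpos)
    have sp: "0 < sin \<phi>" unfolding \<phi>_def using k1 npos
      by (intro sin_gt_zero) (auto simp: field_simps)
    have "2 * \<epsilon> \<le> sin \<phi>" using es[of k] 3 sp k by (auto simp: \<phi>_def)
    moreover have "sin \<phi> < (Re z - n) * sin \<phi>" using x sp by simp
    ultimately show False using ident rhs cosb by linarith
  next
    case 4
    have k1: "2 * real k \<ge> real n + 2" "real k + 1 \<le> real n" using 4 k n by (auto elim!: evenE)
    have s2: "0 < sin (\<phi>/2)" unfolding half using k1 npos
      by (intro sin_gt_zero) (auto simp: field_simps)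
    have lo: "pi / 2 \<le> \<phi>/2 + \<theta>"
    proof -
      have "pi / 2 = pi * (real n / 2) / real n" using npos by simp
      also have "\<dots> \<le> pi * (real k - 1) / real n"
        by (intro divide_right_mono mult_left_mono) (use k1 in auto)
      also have "\<dots> = pi * real k / real n - pi / real n" by (simp add: right_diff_distrib diff_divide_distrib)
      finally show ?thesis using thb half by linarith
    qed
    have hi: "\<phi>/2 + \<theta> \<le> pi"
    proof -
      have "pi * real k / real n + pi / real n = pi * (real k + 1) / real n" by (simp add: distrib_left add_divide_distrib)
      also have "\<dots> \<le> pi * real n / real n"
        by (intro divide_right_mono mult_left_mono) (use k1 in auto)
      also have "\<dots> = pi" using npos by simp
      finally show ?thesis using thb half by linarith
    qed
    have "0 \<le> cos (\<phi>/2 + \<theta> - pi)" using lo hi by (intro cos_ge_zero) auto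
    then have "cos (\<phi>/2 + \<theta>) \<le> 0" by simp
    then have "sin (\<phi> + \<theta>) - sin \<theta> \<le> 0" using sd s2 by (simp add: mult_nonneg_nonpos)
    then have rhs: "0 \<le> t * (sin \<theta> - sin (\<phi> + \<theta>))" using t by simp
    have sp: "sin \<phi> < 0" unfolding \<phi>_def using k1 npos
      by (intro sin_lt_zero) (auto simp: field_simps)
    have "2 * \<epsilon> \<le> - sin \<phi>" using es[of k] 4 sp k by (auto simp: \<phi>_def)
    moreover have "(Re z - n) * sin \<phi> < sin \<phi>" using x sp by simp
    ultimately show False using ident rhs cosb by linarith
  qed
qed

lemma lit_borel: "{z. lit n z} \<in> sets lborel"
proof -
  define f where "f k = (\<lambda>p. lh_center n k - complex_of_real (snd p) * cis (2 * pi * real k / real n + fst p))" for k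
  define C where "C k = (\<Union>m::nat. f k ` ({-(pi / real n)..pi / real n} \<times> {0..real m}))" for k
  define U where "U k = (\<Inter>j\<in>{j. j < n \<and> j \<noteq> k}. - {z. closed_segment (lh_center n k) z \<inter> lh_disk n j \<noteq> {}})" for k
  have eq: "{z. lit n z} = (\<Union>k\<in>{..<n}. C k \<inter> U k)"
  proof (intro equalityI subsetI)
    fix z assume "z \<in> {z. lit n z}"
    then obtain k \<theta> t where k: "k < n" and th: "\<bar>\<theta>\<bar> \<le> pi / real n" and t: "t \<ge> 0"
      and z: "z = lh_center n k - complex_of_real t * cis (2 * pi * real k / real n + \<theta>)"
      and seg: "\<forall>j<n. j \<noteq> k \<longrightarrow> closed_segment (lh_center n k) z \<inter> lh_disk n j = {}"
      unfolding lit_def by blast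
    obtain m :: nat where m: "t \<le> real m" using real_arch_simple by blast
    have "z = f k (\<theta>, t)" by (simp add: f_def z)
    moreover have "(\<theta>, t) \<in> {-(pi / real n)..pi / real n} \<times> {0..real m}" using th t m by auto
    ultimately have "z \<in> C k" unfolding C_def by blast
    moreover have "z \<in> U k" using seg by (auto simp: U_def)
    ultimately show "z \<in> (\<Union>k\<in>{..<n}. C k \<inter> U k)" using k by blast
  next
    fix z assume "z \<in> (\<Union>k\<in>{..<n}. C k \<inter> U k)"
    then obtain k m \<theta> t where k: "k < n" and p: "(\<theta>, t) \<in> {-(pi / real n)..pi / real n} \<times> {0..real m}"
      and z: "z = f k (\<theta>, t)" and u: "z \<in> U k"
      unfolding C_def by blast
    have "\<bar>\<theta>\<bar> \<le> pi / real n" "t \<ge> 0" using p by auto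
    moreover have "\<forall>j<n. j \<noteq> k \<longrightarrow> closed_segment (lh_center n k) z \<inter> lh_disk n j = {}"
      using u by (auto simp: U_def)
    ultimately show "z \<in> {z. lit n z}" unfolding lit_def using k z by (auto simp: f_def)
  qed
  have "C k \<in> sets lborel" for k
  proof -
    have "compact (f k ` ({-(pi / real n)..pi / real n} \<times> {0..real m}))" for m :: nat
      by (intro compact_continuous_image compact_Times compact_Icc)
         (auto simp: f_def intro!: continuous_intros)
    then have "f k ` ({-(pi / real n)..pi / real n} \<times> {0..real m}) \<in> sets lborel" for m :: nat
      by (simp add: borel_closed compact_imp_closed)
    then show ?thesis unfolding C_def by auto
  qed
  moreover have "U k \<in> sets lborel" for k
  proof -
    have "open (U k)" unfolding U_def
      by (intro open_INT) (auto simp: open_Compl lh_disk_def intro!: closed_hit)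
    then show ?thesis by (simp add: borel_open)
  qed
  ultimately show ?thesis unfolding eq by auto
qed

lemma dark_borel: "{z. dark n z} \<in> sets lborel"
proof -
  have eq: "{z. dark n z} = (\<Inter>k\<in>{..<n}. - lh_disk n k) \<inter> - {z. lit n z}"
    by (auto simp: dark_def)
  have "open (\<Inter>k\<in>{..<n}. - lh_disk n k)"
    by (intro open_INT) (auto simp: lh_disk_def open_Compl)
  then show ?thesis unfolding eq using lit_borel[of n]
    by (intro sets.Int sets.compl_sets) (auto simp: borel_open)
qed

lemma sin_nz:
  assumes "even n" "0 < k" "k < n" "k \<noteq> n div 2"
  shows "sin (2 * pi * real k / real n) \<noteq> 0"
proof (cases "2 * k < n")
  case True
  then have "0 < sin (2 * pi * real k / real n)" using assms
    by (intro sin_gt_zero) (auto simp: field_simps)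
  then show ?thesis by simp
next
  case False
  then have "2 * k > n" using assms by (auto elim!: evenE)
  then have "sin (2 * pi * real k / real n) < 0" using assms
    by (intro sin_lt_zero) (auto simp: field_simps)
  then show ?thesis by simp
qed

theorem mainTheorem1:
  fixes n :: nat
  assumes "n \<ge> 2" and "even n"
  shows "emeasure lborel {z. dark n z} = \<infinity>
       \<and> emeasure lborel ({z. dark n z} \<inter> behind0 n) = \<infinity>
       \<and> \<not> bounded ({z. dark n z} \<inter> behind0 n)"
proof -
  define K where "K = {1..<n} - {n div 2}"
  define \<epsilon> where "\<epsilon> = Min (insert (1/2) ((\<lambda>k. \<bar>sin (2 * pi * real k / real n)\<bar> / 2) ` K))"
  have finK: "finite K" by (simp add: K_def)
  have nz: "sin (2 * pi * real k / real n) \<noteq> 0" if "k \<in> K" for k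
    using that by (intro sin_nz[OF assms(2)]) (auto simp: K_def)
  have epos: "\<epsilon> > 0" unfolding \<epsilon>_def using finK nz
    by (subst Min_gr_iff) auto
  have e: "\<epsilon> \<le> 1/2" unfolding \<epsilon>_def using finK by (intro Min_le) auto
  have es: "2 * \<epsilon> \<le> \<bar>sin (2 * pi * real k / real n)\<bar>" if "0 < k" "k < n" "k \<noteq> n div 2" for k
  proof -
    have "k \<in> K" using that by (auto simp: K_def)
    then have "\<epsilon> \<le> \<bar>sin (2 * pi * real k / real n)\<bar> / 2" unfolding \<epsilon>_def using finK
      by (intro Min_le) auto
    then show ?thesis by simp
  qed
  define R where "R = {z. Re z > real n + 1 \<and> \<bar>Im z\<bar> < \<epsilon>}"
  have sub: "R \<subseteq> {z. dark n z} \<inter> behind0 n"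
  proof
    fix z assume z: "z \<in> R"
    have "\<not> lit n z" using z assms e es by (intro not_lit[of n z \<epsilon>]) (auto simp: R_def)
    moreover have "z \<notin> lh_disk n k" for k
    proof
      assume "z \<in> lh_disk n k"
      then have d: "dist (lh_center n k) z \<le> 1" by (simp add: lh_disk_def)
      have "Re (lh_center n k) \<le> real n"
        using mult_left_mono[OF cos_le_one, of "real n" "2 * pi * real k / real n"]
        by (simp add: lh_center_def)
      moreover have "\<bar>Re (lh_center n k - z)\<bar> \<le> dist (lh_center n k) z"
        unfolding dist_norm by (rule abs_Re_le_cmod)
      ultimately show False using d z by (auto simp: R_def)
    qed
    ultimately show "z \<in> {z. dark n z} \<inter> behind0 n" using z by (auto simp: dark_def behind0_def R_def)
  qed
  have meas: "{z. dark n z} \<inter> behind0 n \<in> sets lborel"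
    using dark_borel[of n] by (intro sets.Int) (auto simp: behind0_def borel_open open_halfspace_Re_gt)
  have big: "ennreal (real m * (2 * \<epsilon>)) \<le> emeasure lborel ({z. dark n z} \<inter> behind0 n)" for m :: nat
  proof -
    define l where "l = Complex (real n + 1) (- \<epsilon>)"
    define u where "u = Complex (real n + 1 + real m) \<epsilon>"
    have bx: "box l u \<subseteq> R" by (auto simp: box_def Basis_complex_def l_def u_def R_def)
    have "emeasure lborel (box l u) = ennreal (real m * (2 * \<epsilon>))"
      using epos by (subst emeasure_lborel_box) (auto simp: Basis_complex_def l_def u_def)
    moreover have "emeasure lborel (box l u) \<le> emeasure lborel ({z. dark n z} \<inter> behind0 n)"
      using bx sub meas by (intro emeasure_mono) auto
    ultimately show ?thesis by simp
  qed
  have inf: "emeasure lborel ({z. dark n z} \<inter> behind0 n) = \<infinity>"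
  proof (rule ccontr)
    assume "emeasure lborel ({z. dark n z} \<inter> behind0 n) \<noteq> \<infinity>"
    then obtain r where r: "emeasure lborel ({z. dark n z} \<inter> behind0 n) = ennreal r" "r \<ge> 0"
      by (cases "emeasure lborel ({z. dark n z} \<inter> behind0 n)") auto
    obtain m :: nat where m: "r / (2 * \<epsilon>) < real m" using reals_Archimedean2 by blast
    have "r < real m * (2 * \<epsilon>)" using m epos by (simp add: field_simps)
    moreover have "real m * (2 * \<epsilon>) \<le> r" using big[of m] r epos by (simp add: ennreal_le_iff)
    ultimately show False by simp
  qed
  have inf2: "emeasure lborel {z. dark n z} = \<infinity>"
  proof -
    have "emeasure lborel ({z. dark n z} \<inter> behind0 n) \<le> emeasure lborel {z. dark n z}"
      using dark_borel[of n] by (intro emeasure_mono) auto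
    then show ?thesis using inf by (simp add: top_unique)
  qed
  have unb: "\<not> bounded ({z. dark n z} \<inter> behind0 n)"
  proof
    assume "bounded ({z. dark n z} \<inter> behind0 n)"
    then obtain B where B: "\<And>x. x \<in> {z. dark n z} \<inter> behind0 n \<Longrightarrow> norm x \<le> B"
      unfolding bounded_iff by blast
    define x where "x = complex_of_real (real n + 2 + \<bar>B\<bar>)"
    have "x \<in> R" using epos by (simp add: R_def x_def)
    then have "norm x \<le> B" using sub B by blast
    moreover have "norm x = real n + 2 + \<bar>B\<bar>" unfolding x_def norm_of_real by simp
    ultimately show False by simp
  qed
  show ?thesis using inf inf2 unb by blast
qed

end
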